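(* Let $\mu>-1$, $\beta>0$, $N\ge1$, $Z\in\{G,R\}$, $\omega=x^\mu$. Let $\phi_1,\phi_2$ be real continuous functions on $[0,\infty)$ in $L^2_{x^\mu}(\mathbb R_+)$, $\phi=\phi_1\phi_2$, $\psi_i=\widehat I_{Z,N}^{(\mu,\beta)}\phi_i$ ($i=1,2$). Then $$\Bigl|\int_0^\infty\phi(x)x^\mu dx-\sum_{j=0}^N\phi\bigl(\xi^{(\mu,\beta)}_{Z,N,j}\bigr)\widehat\omega^{(\mu,\beta)}_{Z,N,j}\Bigr| \le\bigl(\|\phi_1\|_\omega+\|\phi_2\|_\omega+\|\psi_1\|_\omega+\|\psi_2\|_\omega\bigr)\bigl(\|\phi_1-\psi_1\|_\omega+\|\phi_2-\psi_2\|_\omega\bigr).$$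
   Context: $\|f\|_\omega=(\int_0^\infty|f|^2\omega)^{1/2}$; $P_K$ is the space of polynomials of degree at most $K$. $\mathscr L_n^{(\alpha)}$ is the generalized Laguerre polynomial (orthogonal on $(0,\infty)$ w.r.t. $x^\alpha e^{-x}$), $\widehat{\mathscr L}_n^{(\alpha)}(x)=e^{-x/2}\mathscr L_n^{(\alpha)}(x)$, and $\widehat P_N^{\beta,L}=\{e^{-\beta x/2}p:p\in P_N\}$. Laguerre–Gauss nodes $\xi^{(\mu,\beta)}_{G,N,j}$ ($0\le j\le N$) are the zeros of $\widehat{\mathscr L}^{(\mu)}_{N+1}(\beta x)$; Laguerre–Gauss–Radau nodes $\xi^{(\mu,\beta)}_{R,N,j}$ are the zeros of $x\,\widehat{\mathscr L}^{(\mu+1)}_{N}(\beta x)$. $\widehat I_{Z,N}^{(\mu,\beta)}v$ is the unique element of $\widehat P_N^{\beta,L}$ agreeing with $v$ at these nodes. The weights $\widehat\omega^{(\mu,\beta)}_{Z,N,j}$ are the numbers such that $\int_0^\infty\phi(x)x^\mu dx=\sum_{j}\phi(\xi^{(\mu,\beta)}_{Z,N,j})\widehat\omega^{(\mu,\beta)}_{Z,N,j}$ for all $\phi\in\{e^{-\beta x}p:p\in P_{2N+\lambda_Z}\}$, with $\lambda_G=1$, $\lambda_R=0$ (equivalently $\widehat\omega_{Z,N,j}=e^{\beta\xi_{Z,N,j}}\omega_{Z,N,j}$ where $\omega_{Z,N,j}$ are the Gauss, resp. Gauss–Radau, weights for the weight $x^\mu e^{-\beta x}$). *)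

theory Defs
  imports "HOL-Analysis.Analysis" "HOL-Computational_Algebra.Polynomial"
begin

definition laguerre :: "real \<Rightarrow> nat \<Rightarrow> real \<Rightarrow> real" where
  "laguerre \<alpha> n x = (\<Sum>k\<le>n. (-1)^k * ((real n + \<alpha>) gchoose (n - k)) / fact k * x ^ k)"

definition hat_laguerre :: "real \<Rightarrow> nat \<Rightarrow> real \<Rightarrow> real" where
  "hat_laguerre \<alpha> n x = exp (- x / 2) * laguerre \<alpha> n x"

datatype quad_kind = Gauss | Radau

definition lam :: "quad_kind \<Rightarrow> nat" where
  "lam Z = (case Z of Gauss \<Rightarrow> 1 | Radau \<Rightarrow> 0)"

definition lg_nodes :: "quad_kind \<Rightarrow> real \<Rightarrow> real \<Rightarrow> nat \<Rightarrow> real set" where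
  "lg_nodes Z \<mu> \<beta> N = (case Z of
      Gauss \<Rightarrow> {x. 0 \<le> x \<and> hat_laguerre \<mu> (N + 1) (\<beta> * x) = 0}
    | Radau \<Rightarrow> {x. 0 \<le> x \<and> x * hat_laguerre (\<mu> + 1) N (\<beta> * x) = 0})"

definition lg_weight :: "quad_kind \<Rightarrow> real \<Rightarrow> real \<Rightarrow> nat \<Rightarrow> real \<Rightarrow> real" where
  "lg_weight Z \<mu> \<beta> N = (THE w. (\<forall>x. x \<notin> lg_nodes Z \<mu> \<beta> N \<longrightarrow> w x = 0) \<and>
      (\<forall>p :: real poly. degree p \<le> 2 * N + lam Z \<longrightarrow>
         (LINT x:{0<..}|lborel. exp (- \<beta> * x) * poly p x * x powr \<mu>) =
         (\<Sum>\<xi>\<in>lg_nodes Z \<mu> \<beta> N. exp (- \<beta> * \<xi>) * poly p \<xi> * w \<xi>)))"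

definition lg_interp :: "quad_kind \<Rightarrow> real \<Rightarrow> real \<Rightarrow> nat \<Rightarrow> (real \<Rightarrow> real) \<Rightarrow> real \<Rightarrow> real" where
  "lg_interp Z \<mu> \<beta> N v = (let q = (THE q :: real poly. degree q \<le> N \<and>
        (\<forall>\<xi>\<in>lg_nodes Z \<mu> \<beta> N. exp (- \<beta> * \<xi> / 2) * poly q \<xi> = v \<xi>))
      in (\<lambda>x. exp (- \<beta> * x / 2) * poly q x))"

definition wnorm :: "real \<Rightarrow> (real \<Rightarrow> real) \<Rightarrow> real" where
  "wnorm \<mu> f = sqrt (LINT x:{0<..}|lborel. (f x)\<^sup>2 * x powr \<mu>)"

end

theory Submission
  imports Defs
begin


lemma degree_diff_shift_less:
  fixes P :: "real poly"
  assumes "degree P > 0"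
  shows "degree (pcompose P [:1,1:] - P) < degree P"
proof -
  let ?D = "pcompose P [:1,1:] - P"
  have d1: "degree (pcompose P [:1,1:]) = degree P" by (simp add: degree_pcompose)
  have lc: "lead_coeff (pcompose P [:1,1:]) = lead_coeff P" by (simp add: lead_coeff_comp)
  have le: "degree ?D \<le> degree P" using degree_diff_le_max[of "pcompose P [:1,1:]" P] d1 by simp
  have c0: "coeff ?D (degree P) = 0" using lc d1 by simp
  show ?thesis
  proof (rule ccontr)
    assume "\<not> ?thesis"
    hence "degree ?D = degree P" using le by simp
    hence "?D = 0" using c0 by (metis leading_coeff_0_iff)
    hence "degree ?D = 0" by simp
    thus False using assms \<open>degree ?D = degree P\<close> by simp
  qed
qed

lemma fin_diff_zero:
  fixes P :: "real poly"
  shows "degree P < n \<Longrightarrow> (\<Sum>j\<le>n. (-1)^j * real (n choose j) * poly P (real j)) = 0"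
proof (induction n arbitrary: P)
  case 0
  then show ?case by simp
next
  case (Suc n)
  define D where "D = pcompose P [:1,1:] - P"
  have pD: "poly D x = poly P (x + 1) - poly P x" for x
    by (simp add: D_def poly_pcompose algebra_simps)
  have D0: "(\<Sum>j\<le>n. (-1)^j * real (n choose j) * poly D (real j)) = 0"
  proof (cases "degree P = 0")
    case True
    then obtain c where "P = [:c:]" by (metis degree_eq_zeroE)
    hence "D = 0" by (simp add: D_def)
    thus ?thesis by simp
  next
    case False
    hence "degree D < degree P" unfolding D_def by (intro degree_diff_shift_less) simp
    with Suc.prems have "degree D < n" by simp
    thus ?thesis by (rule Suc.IH)
  qed
  let ?f = "\<lambda>j. poly P (real j)"
  have "(\<Sum>j\<le>Suc n. (-1)^j * real (Suc n choose j) * ?f j)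
      = ?f 0 + (\<Sum>j\<le>n. (-1)^(Suc j) * real (Suc n choose Suc j) * ?f (Suc j))"
    by (subst sum.atMost_Suc_shift) simp
  also have "\<dots> = ?f 0 + (\<Sum>j\<le>n. (-1)^(Suc j) * real (n choose Suc j) * ?f (Suc j))
       + (\<Sum>j\<le>n. (-1)^(Suc j) * real (n choose j) * ?f (Suc j))"
    by (subst add.assoc, subst sum.distrib[symmetric], simp add: algebra_simps)
  also have "?f 0 + (\<Sum>j\<le>n. (-1)^(Suc j) * real (n choose Suc j) * ?f (Suc j))
      = (\<Sum>j\<le>Suc n. (-1)^j * real (n choose j) * ?f j)"
    by (subst sum.atMost_Suc_shift) simp
  also have "\<dots> = (\<Sum>j\<le>n. (-1)^j * real (n choose j) * ?f j)"
    by simp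
  also have "(\<Sum>j\<le>n. (-1)^j * real (n choose j) * ?f j) + (\<Sum>j\<le>n. (-1)^(Suc j) * real (n choose j) * ?f (Suc j))
      = - (\<Sum>j\<le>n. (-1)^j * real (n choose j) * poly D (real j))"
    by (simp add: pD sum.distrib[symmetric] sum_negf[symmetric] algebra_simps)
  finally show ?case using D0 by simp
qed

lemma lag_orth_sum:
  fixes \<alpha> :: real
  assumes "\<alpha> > -1" "k < n"
  shows "(\<Sum>j\<le>n. (-1)^j * ((real n + \<alpha>) gchoose (n-j)) / fact j * Gamma (real (k+j) + \<alpha> + 1)) = 0"
proof -
  define K where "K = Gamma (\<alpha>+1) * pochhammer (\<alpha>+1) n / fact n"
  define P where "P = (\<Prod>i<k. [:\<alpha>+1+real i, 1:])"
  have pP: "poly P (real j) = pochhammer (\<alpha>+1+real j) k" for j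
    by (simp add: P_def poly_prod pochhammer_prod atLeast0LessThan algebra_simps)
  have dP: "degree P < n"
  proof -
    have "degree P \<le> (\<Sum>i<k. degree [:\<alpha>+1+real i, 1:])"
      unfolding P_def by (rule order.trans[OF degree_prod_sum_le]) simp_all
    also have "\<dots> = k" by simp
    finally show ?thesis using assms by simp
  qed
  have nz: "\<alpha> + 1 \<notin> \<int>\<^sub>\<le>\<^sub>0" using assms(1)
    by (auto dest: nonpos_Ints_nonpos)
  have tm: "(-1)^j * ((real n + \<alpha>) gchoose (n-j)) / fact j * Gamma (real (k+j) + \<alpha> + 1)
        = K * ((-1)^j * real (n choose j) * poly P (real j))" if j: "j \<le> n" for j
  proof -
    have g: "(real n + \<alpha>) gchoose (n-j) = pochhammer (\<alpha>+1+real j) (n-j) / fact (n-j)"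
      using j by (simp add: gbinomial_pochhammer' of_nat_diff algebra_simps)
    have G: "Gamma (real (k+j) + \<alpha> + 1) = Gamma (\<alpha>+1) * pochhammer (\<alpha>+1) (j+k)"
      using pochhammer_Gamma[OF nz, of "j+k"] Gamma_eq_zero_iff[of "\<alpha>+1"] nz
      by (auto simp: field_simps)
    have p1: "pochhammer (\<alpha>+1) (j+k) = pochhammer (\<alpha>+1) j * pochhammer (\<alpha>+1+real j) k"
      by (simp add: pochhammer_product')
    have p2: "pochhammer (\<alpha>+1) n = pochhammer (\<alpha>+1) j * pochhammer (\<alpha>+1+real j) (n-j)"
      using pochhammer_product'[of "\<alpha>+1" j "n-j"] j by simp
    have b: "real (n choose j) = fact n / (fact j * fact (n-j))" using binomial_fact[OF j] by simp
    show ?thesis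
      unfolding g G p1 K_def b pP p2 by (simp add: field_simps)
  qed
  have "(\<Sum>j\<le>n. (-1)^j * ((real n + \<alpha>) gchoose (n-j)) / fact j * Gamma (real (k+j) + \<alpha> + 1))
      = (\<Sum>j\<le>n. K * ((-1)^j * real (n choose j) * poly P (real j)))"
    by (intro sum.cong refl tm) simp
  also have "\<dots> = K * (\<Sum>j\<le>n. (-1)^j * real (n choose j) * poly P (real j))"
    by (simp add: sum_distrib_left)
  also have "\<dots> = 0" using fin_diff_zero[OF dP] by simp
  finally show ?thesis .
qed



lemma gamma_beta:
  fixes a \<beta> :: real
  assumes a: "a > -1" and b: "\<beta> > 0"
  shows "has_bochner_integral lborel (\<lambda>x. indicator {0<..} x * (exp (-\<beta>*x) * x powr a))
           (Gamma (a+1) / \<beta> powr (a+1))"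
proof -
  define f where "f = (\<lambda>x. ennreal (indicator {0<..} x * (exp (-\<beta>*x) * x powr a)))"
  have fm: "f \<in> borel_measurable borel" unfolding f_def by measurable
  have "(\<integral>\<^sup>+x. f x \<partial>lborel) = \<bar>1/\<beta>\<bar> * (\<integral>\<^sup>+x. f (0 + (1/\<beta>) * x) \<partial>lborel)"
    by (rule nn_integral_real_affine[OF fm]) (use b in simp)
  also have "(\<lambda>x. f (0 + (1/\<beta>) * x)) = (\<lambda>x. ennreal (\<beta> powr (-a)) * ennreal (indicator {0..} x * x powr ((a+1) - 1) / exp x))"
  proof
    fix x :: real
    show "f (0 + (1/\<beta>) * x) = ennreal (\<beta> powr (-a)) * ennreal (indicator {0..} x * x powr ((a+1) - 1) / exp x)"
    proof (cases "x > 0")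
      case True
      hence "f (0 + (1/\<beta>) * x) = ennreal (exp (-x) * (x / \<beta>) powr a)"
        using b by (simp add: f_def)
      also have "(x / \<beta>) powr a = \<beta> powr (-a) * x powr a"
        using True b by (simp add: powr_divide powr_minus field_simps)
      finally show ?thesis using True b
        by (simp add: ennreal_mult[symmetric] exp_minus field_simps)
    next
      case False
      thus ?thesis using b by (cases "x = 0") (auto simp: f_def indicator_def zero_less_mult_iff zero_less_divide_iff)
    qed
  qed
  also have "(\<integral>\<^sup>+x. ennreal (\<beta> powr (-a)) * ennreal (indicator {0..} x * x powr ((a+1) - 1) / exp x) \<partial>lborel)
      = ennreal (\<beta> powr (-a)) * (\<integral>\<^sup>+x. ennreal (indicator {0..} x * x powr ((a+1) - 1) / exp x) \<partial>lborel)"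
    by (rule nn_integral_cmult) measurable
  also have "(\<integral>\<^sup>+x. ennreal (indicator {0..} x * x powr ((a+1) - 1) / exp x) \<partial>lborel) = Gamma (a+1)"
    using Gamma_conv_nn_integral_real[of "a+1"] a by simp
  finally have nn: "(\<integral>\<^sup>+x. f x \<partial>lborel) = ennreal (Gamma (a+1) / \<beta> powr (a+1))"
    using b a Gamma_real_pos[of "a+1"]
    by (simp add: ennreal_mult[symmetric] powr_minus powr_add field_simps)
  show ?thesis
    by (rule has_bochner_integral_nn_integral)
       (use nn a b Gamma_real_pos[of "a+1"] in \<open>auto simp: f_def indicator_def\<close>)
qed



lemma set_integrable_sum':
  fixes f :: "'i \<Rightarrow> real \<Rightarrow> real"
  assumes "finite I" "\<And>i. i \<in> I \<Longrightarrow> set_integrable lborel A (f i)"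
  shows "set_integrable lborel A (\<lambda>x. \<Sum>i\<in>I. f i x) \<and>
         (LINT x:A|lborel. (\<Sum>i\<in>I. f i x)) = (\<Sum>i\<in>I. LINT x:A|lborel. f i x)"
  using assms
proof (induction I rule: finite_induct)
  case empty
  then show ?case by (simp add: set_integrable_def)
next
  case (insert a F)
  have ia: "set_integrable lborel A (f a)" using insert by simp
  have iF: "set_integrable lborel A (\<lambda>x. \<Sum>i\<in>F. f i x)"
       and eF: "(LINT x:A|lborel. (\<Sum>i\<in>F. f i x)) = (\<Sum>i\<in>F. LINT x:A|lborel. f i x)"
    using insert by auto
  have "set_integrable lborel A (\<lambda>x. f a x + (\<Sum>i\<in>F. f i x))"
    using ia iF unfolding set_integrable_def scaleR_add_right by (rule Bochner_Integration.integrable_add)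
  moreover have "(LINT x:A|lborel. f a x + (\<Sum>i\<in>F. f i x)) = (LINT x:A|lborel. f a x) + (LINT x:A|lborel. (\<Sum>i\<in>F. f i x))"
    by (rule set_integral_add[OF ia iF])
  ultimately show ?case using insert eF by simp
qed

definition GM :: "real \<Rightarrow> real \<Rightarrow> nat \<Rightarrow> real" where
  "GM \<alpha> \<beta> k = Gamma (real k + \<alpha> + 1) / \<beta> powr (real k + \<alpha> + 1)"

lemma mono_int:
  assumes a: "\<alpha> > -1" and b: "\<beta> > 0"
  shows "set_integrable lborel {0<..} (\<lambda>x. exp (-\<beta>*x) * x^k * x powr \<alpha>)
     \<and> (LINT x:{0<..}|lborel. exp (-\<beta>*x) * x^k * x powr \<alpha>) = GM \<alpha> \<beta> k"
proof -
  have eq: "(\<lambda>x. indicator {0<..} x *\<^sub>R (exp (-\<beta>*x) * x^k * x powr \<alpha>))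
      = (\<lambda>x. indicator {0<..} x * (exp (-\<beta>*x) * x powr (real k + \<alpha>)))"
    by (auto simp: indicator_def powr_add powr_realpow)
  have h: "has_bochner_integral lborel (\<lambda>x. indicator {0<..} x *\<^sub>R (exp (-\<beta>*x) * x^k * x powr \<alpha>)) (GM \<alpha> \<beta> k)"
    unfolding eq GM_def using gamma_beta[of "real k + \<alpha>" \<beta>] a b by (simp add: add.assoc)
  show ?thesis
    using integrable.intros[OF h] has_bochner_integral_integral_eq[OF h]
    by (simp add: set_integrable_def set_lebesgue_integral_def)
qed

lemma int_lin:
  assumes a: "\<alpha> > -1" and b: "\<beta> > 0" and fin: "finite I"
  shows "set_integrable lborel {0<..} (\<lambda>x. exp (-\<beta>*x) * (\<Sum>i\<in>I. c i * x^(e i)) * x powr \<alpha>)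
     \<and> (LINT x:{0<..}|lborel. exp (-\<beta>*x) * (\<Sum>i\<in>I. c i * x^(e i)) * x powr \<alpha>)
        = (\<Sum>i\<in>I. c i * GM \<alpha> \<beta> (e i))"
proof -
  have eq: "(\<lambda>x. exp (-\<beta>*x) * (\<Sum>i\<in>I. c i * x^(e i)) * x powr \<alpha>)
     = (\<lambda>x. \<Sum>i\<in>I. c i * (exp (-\<beta>*x) * x^(e i) * x powr \<alpha>))"
    by (simp add: sum_distrib_left sum_distrib_right algebra_simps)
  have "\<And>i. set_integrable lborel {0<..} (\<lambda>x. c i * (exp (-\<beta>*x) * x^(e i) * x powr \<alpha>))"
    using mono_int[OF a b] by simp
  from set_integrable_sum'[OF fin this] show ?thesis
    unfolding eq using mono_int[OF a b] by simp
qed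

lemma int_poly:
  assumes a: "\<alpha> > -1" and b: "\<beta> > 0"
  shows "set_integrable lborel {0<..} (\<lambda>x. exp (-\<beta>*x) * poly p x * x powr \<alpha>)
     \<and> (LINT x:{0<..}|lborel. exp (-\<beta>*x) * poly p x * x powr \<alpha>)
        = (\<Sum>i\<le>degree p. coeff p i * GM \<alpha> \<beta> i)"
  using int_lin[OF a b, of "{..degree p}" "coeff p" "\<lambda>i. i"] by (simp add: poly_altdef)

definition lcoef :: "real \<Rightarrow> nat \<Rightarrow> nat \<Rightarrow> real" where
  "lcoef \<alpha> n j = (-1)^j * ((real n + \<alpha>) gchoose (n-j)) / fact j"

definition LQ :: "real \<Rightarrow> nat \<Rightarrow> real \<Rightarrow> real poly" where
  "LQ \<alpha> n \<beta> = (\<Sum>j\<le>n. monom (lcoef \<alpha> n j * \<beta>^j) j)"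

lemma poly_LQ: "poly (LQ \<alpha> n \<beta>) x = laguerre \<alpha> n (\<beta> * x)"
  by (simp add: LQ_def laguerre_def lcoef_def poly_sum poly_monom power_mult_distrib algebra_simps)

lemma poly_LQ': "poly (LQ \<alpha> n \<beta>) x = (\<Sum>j\<le>n. (lcoef \<alpha> n j * \<beta>^j) * x^j)"
  by (simp add: LQ_def poly_sum poly_monom)

lemma coeff_LQ: "coeff (LQ \<alpha> n \<beta>) m = (if m \<le> n then lcoef \<alpha> n m * \<beta>^m else 0)"
  by (simp add: LQ_def coeff_sum)

lemma degree_LQ:
  assumes "\<beta> > 0"
  shows "degree (LQ \<alpha> n \<beta>) = n"
proof (rule antisym)
  show "degree (LQ \<alpha> n \<beta>) \<le> n"
    by (rule degree_le) (simp add: coeff_LQ)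
  have "coeff (LQ \<alpha> n \<beta>) n \<noteq> 0" using assms by (simp add: coeff_LQ lcoef_def)
  thus "n \<le> degree (LQ \<alpha> n \<beta>)" by (rule le_degree)
qed

lemma LQ_orth:
  assumes a: "\<alpha> > -1" and b: "\<beta> > 0" and dq: "degree q < n"
  shows "(LINT x:{0<..}|lborel. exp (-\<beta>*x) * poly (q * LQ \<alpha> n \<beta>) x * x powr \<alpha>) = 0"
proof -
  let ?I = "{..degree q} \<times> {..n}"
  have pe: "poly (q * LQ \<alpha> n \<beta>) x = (\<Sum>ij\<in>?I. (coeff q (fst ij) * (lcoef \<alpha> n (snd ij) * \<beta>^(snd ij))) * x^(fst ij + snd ij))" for x
    by (simp add: poly_altdef[of q] poly_LQ' sum_product sum.cartesian_product power_add split_beta algebra_simps)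
  have "(LINT x:{0<..}|lborel. exp (-\<beta>*x) * poly (q * LQ \<alpha> n \<beta>) x * x powr \<alpha>)
     = (\<Sum>ij\<in>?I. (coeff q (fst ij) * (lcoef \<alpha> n (snd ij) * \<beta>^(snd ij))) * GM \<alpha> \<beta> (fst ij + snd ij))"
    unfolding pe by (rule conjunct2[OF int_lin[OF a b]]) simp
  also have "\<dots> = (\<Sum>i\<le>degree q. coeff q i * (\<Sum>j\<le>n. lcoef \<alpha> n j * \<beta>^j * GM \<alpha> \<beta> (i + j)))"
    by (simp add: sum.cartesian_product split_beta sum_distrib_left algebra_simps)
  also have "\<dots> = 0"
  proof (rule sum.neutral, rule ballI)
    fix i assume i: "i \<in> {..degree q}"
    have "(\<Sum>j\<le>n. lcoef \<alpha> n j * \<beta>^j * GM \<alpha> \<beta> (i + j))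
        = (\<Sum>j\<le>n. lcoef \<alpha> n j * Gamma (real (i+j) + \<alpha> + 1)) / \<beta> powr (real i + \<alpha> + 1)"
    proof -
      have "lcoef \<alpha> n j * \<beta>^j * GM \<alpha> \<beta> (i + j) = lcoef \<alpha> n j * Gamma (real (i+j) + \<alpha> + 1) / \<beta> powr (real i + \<alpha> + 1)" for j
      proof -
        have "\<beta> powr (real (i + j) + \<alpha> + 1) = \<beta>^j * \<beta> powr (real i + \<alpha> + 1)"
          using b by (simp add: powr_add powr_realpow[symmetric] algebra_simps)
        thus ?thesis using b by (simp add: GM_def field_simps)
      qed
      thus ?thesis by (simp add: sum_divide_distrib)
    qed
    also have "\<dots> = 0"
      using lag_orth_sum[OF a, of i n] i dq by (simp add: lcoef_def)
    finally show "coeff q i * (\<Sum>j\<le>n. lcoef \<alpha> n j * \<beta>^j * GM \<alpha> \<beta> (i + j)) = 0" by simp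
  qed
  finally show ?thesis .
qed



lemma even_order_sign:
  fixes p :: "real poly"
  assumes "p \<noteq> 0" "\<And>x. x > 0 \<Longrightarrow> poly p x = 0 \<Longrightarrow> even (order x p)"
  shows "(\<forall>x>0. poly p x \<ge> 0) \<or> (\<forall>x>0. poly p x \<le> 0)"
  using assms
proof (induction "degree p" arbitrary: p rule: less_induct)
  case (less p)
  show ?case
  proof (cases "\<exists>r>0. poly p r = 0")
    case False
    show ?thesis
    proof (rule ccontr)
      assume "\<not> ?thesis"
      then obtain a b where ab: "a > 0" "b > 0" "poly p a < 0" "poly p b > 0"
        by (auto simp: not_le)
      show False
      proof (cases "a < b")
        case True
        from poly_IVT_pos[OF True ab(3,4)] ab False show False by auto
      next
        case F: False
        hence "b < a" using ab by (cases "a = b") auto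
        from poly_IVT_neg[OF this ab(4,3)] ab False show False by auto
      qed
    qed
  next
    case True
    then obtain r where r: "r > 0" "poly p r = 0" by auto
    have "order r p \<noteq> 0" using r less.prems(1) order_root by blast
    moreover have "even (order r p)" using less.prems(2) r by blast
    ultimately have o2: "order r p \<ge> 2" by presburger
    have "[:-r,1:]^2 dvd p"
      using order_1[of r p] o2 by (meson le_imp_power_dvd dvd_trans)
    then obtain q where q: "p = [:-r,1:]^2 * q" by (auto simp: dvd_def)
    have qnz: "q \<noteq> 0" using q less.prems(1) by auto
    have dg: "degree p = 2 + degree q" using q qnz by (simp add: degree_mult_eq degree_power_eq)
    have "(\<forall>x>0. poly q x \<ge> 0) \<or> (\<forall>x>0. poly q x \<le> 0)"
    proof (rule less.hyps)
      show "degree q < degree p" using dg by simp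
      show "q \<noteq> 0" by fact
      fix x :: real assume x: "x > 0" "poly q x = 0"
      hence "poly p x = 0" using q by simp
      hence ev: "even (order x p)" using less.prems(2) x by blast
      have om: "order x p = order x ([:-r,1:]^2) + order x q"
        using q less.prems(1) by (simp add: order_mult)
      have "even (order x ([:-r,1:]^2))"
      proof (cases "x = r")
        case True thus ?thesis by (simp add: order_power_n_n)
      next
        case False
        hence "poly ([:-r,1:]^2) x \<noteq> 0" by simp
        thus ?thesis by (simp add: order_0I)
      qed
      thus "even (order x q)" using ev om by simp
    qed
    moreover have "poly p x = (x - r)^2 * poly q x" for x using q by simp
    ultimately show ?thesis by (auto intro: mult_nonneg_nonneg mult_nonneg_nonpos)
  qed
qed

lemma poly_AE_zero:
  fixes p :: "real poly"
  assumes "AE x in lborel. x > 0 \<longrightarrow> poly p x = 0"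
  shows "p = 0"
proof (rule ccontr)
  assume p: "p \<noteq> 0"
  have "{x. poly p x = 0} \<in> null_sets lborel"
    by (rule finite_imp_null_set_lborel, rule poly_roots_finite[OF p])
  hence "AE x in lborel. x \<notin> {x. poly p x = 0}"
    using AE_iff_null_sets by blast
  with assms have "AE x in lborel. x \<notin> {0<..1::real}"
    by eventually_elim auto
  hence "{0<..1::real} \<in> null_sets lborel"
    using AE_iff_null_sets[of "{0<..1::real}" lborel] by simp
  hence "emeasure lborel {0<..1::real} = 0" by auto
  thus False by simp
qed

lemma LQ_roots:
  assumes a: "\<alpha> > -1" and b: "\<beta> > 0"
  shows "n \<le> card {x. x > 0 \<and> poly (LQ \<alpha> n \<beta>) x = 0}"
proof -
  define Q where "Q = LQ \<alpha> n \<beta>"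
  have Qnz: "Q \<noteq> 0"
  proof
    assume "Q = 0"
    hence "coeff Q n = 0" by simp
    thus False using b by (simp add: Q_def coeff_LQ lcoef_def)
  qed
  define T where "T = {x. x > 0 \<and> poly Q x = 0 \<and> odd (order x Q)}"
  have Tsub: "T \<subseteq> {x. x > 0 \<and> poly Q x = 0}" by (auto simp: T_def)
  have finR: "finite {x. x > 0 \<and> poly Q x = 0}"
    by (rule finite_subset[OF _ poly_roots_finite[OF Qnz]]) auto
  have finT: "finite T" using Tsub finR finite_subset by blast
  define q where "q = (\<Prod>t\<in>T. [:-t,1:])"
  have qnz: "q \<noteq> 0" by (simp add: q_def finT)
  have pq: "poly q x = (\<Prod>t\<in>T. x - t)" for x by (simp add: q_def poly_prod)
  have dq: "degree q \<le> card T"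
  proof -
    have "degree q \<le> (\<Sum>t\<in>T. degree [:-t,(1::real):])"
      unfolding q_def by (rule order.trans[OF degree_prod_sum_le[OF finT]]) simp
    thus ?thesis by simp
  qed
  have oq: "order x q = (if x \<in> T then 1 else 0)" for x
  proof (cases "x \<in> T")
    case True
    have "q = [:-x,1:] * (\<Prod>t\<in>T-{x}. [:-t,1:])"
      unfolding q_def using True finT by (simp add: prod.remove)
    moreover have "poly (\<Prod>t\<in>T-{x}. [:-t,1:]) x \<noteq> 0"
      using finT by (simp add: poly_prod)
    ultimately have "order x q = order x [:-x,1:] + 0"
      using qnz order_mult[of "[:-x,1:]" "(\<Prod>t\<in>T-{x}. [:-t,1:])" x] order_0I[of "(\<Prod>t\<in>T-{x}. [:-t,1:])" x]
      by simp
    also have "order x [:-x,(1::real):] = 1" using order_power_n_n[of x 1] by simp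
    finally show ?thesis using True by simp
  next
    case False
    hence "poly q x \<noteq> 0" using finT by (simp add: pq)
    thus ?thesis using False by (simp add: order_0I)
  qed
  show ?thesis
  proof (rule ccontr)
    assume "\<not> ?thesis"
    hence "card T < n" using card_mono[OF finR Tsub] unfolding Q_def by linarith
    hence "degree q < n" using dq by linarith
    hence orth: "(LINT x:{0<..}|lborel. exp (-\<beta>*x) * poly (q * Q) x * x powr \<alpha>) = 0"
      unfolding Q_def by (rule LQ_orth[OF a b])
    have qQ: "q * Q \<noteq> 0" using qnz Qnz by simp
    have sgn: "(\<forall>x>0. poly (q*Q) x \<ge> 0) \<or> (\<forall>x>0. poly (q*Q) x \<le> 0)"
    proof (rule even_order_sign[OF qQ])
      fix x :: real assume x: "x > 0" "poly (q*Q) x = 0"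
      have "order x (q*Q) = order x q + order x Q" using qQ by (simp add: order_mult)
      moreover have "x \<in> T \<longleftrightarrow> poly Q x = 0 \<and> odd (order x Q)" using x by (simp add: T_def)
      moreover have "poly Q x \<noteq> 0 \<Longrightarrow> order x Q = 0" by (rule order_0I)
      ultimately show "even (order x (q*Q))" using oq[of x] by (cases "x \<in> T") auto
    qed
    define g where "g = (\<lambda>x. indicator {0<..} x * (exp (-\<beta>*x) * poly (q * Q) x * x powr \<alpha>))"
    have gi: "integrable lborel g"
      using conjunct1[OF int_poly[OF a b, of "q*Q"]] by (simp add: g_def set_integrable_def)
    have g0: "integral\<^sup>L lborel g = 0"
      using orth by (simp add: g_def set_lebesgue_integral_def)
    have key: "AE x in lborel. g x = 0" if nn: "\<forall>x. 0 \<le> g x"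
      and gi: "integrable lborel g" and g0: "integral\<^sup>L lborel g = 0" for g :: "real \<Rightarrow> real"
      using integral_nonneg_eq_0_iff_AE[OF gi] nn g0 by simp
    have "AE x in lborel. g x = 0"
    proof (cases "\<forall>x>0. poly (q*Q) x \<ge> 0")
      case True
      hence "\<forall>x. 0 \<le> g x" by (auto simp: g_def indicator_def)
      thus ?thesis using key[OF _ gi g0] by simp
    next
      case False
      hence "\<forall>x>0. poly (q*Q) x \<le> 0" using sgn by blast
      have "0 \<le> - g x" for x
      proof (cases "x > 0")
        case True
        hence "poly (q*Q) x \<le> 0" using \<open>\<forall>x>0. poly (q*Q) x \<le> 0\<close> by blast
        moreover have "exp (-\<beta>*x) * x powr \<alpha> > 0" using True by simp
        ultimately have "0 \<le> (exp (-\<beta>*x) * x powr \<alpha>) * (- poly (q*Q) x)"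
          by (intro mult_nonneg_nonneg) simp_all
        thus ?thesis using True by (simp add: g_def algebra_simps)
      qed (simp add: g_def)
      hence "\<forall>x. 0 \<le> - g x" by blast
      moreover have "integrable lborel (\<lambda>x. - g x)" using gi by simp
      moreover have "integral\<^sup>L lborel (\<lambda>x. - g x) = 0" using g0 by simp
      ultimately have "AE x in lborel. - g x = 0" by (rule key)
      thus ?thesis by simp
    qed
    hence "AE x in lborel. x > 0 \<longrightarrow> poly (q*Q) x = 0"
      by eventually_elim (auto simp: g_def)
    hence "q * Q = 0" by (rule poly_AE_zero)
    thus False using qQ by simp
  qed
qed

lemma LQ_roots_exact:
  assumes a: "\<alpha> > -1" and b: "\<beta> > 0"
  shows "{x. poly (LQ \<alpha> n \<beta>) x = 0} = {x. x > 0 \<and> poly (LQ \<alpha> n \<beta>) x = 0}"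
    and "card {x. poly (LQ \<alpha> n \<beta>) x = 0} = n"
proof -
  define Q where "Q = LQ \<alpha> n \<beta>"
  have Qnz: "Q \<noteq> 0"
  proof
    assume "Q = 0"
    hence "coeff Q n = 0" by simp
    thus False using b by (simp add: Q_def coeff_LQ lcoef_def)
  qed
  have le: "card {x. poly Q x = 0} \<le> n"
    using card_poly_roots_bound[OF Qnz] degree_LQ[OF b] by (simp add: Q_def)
  have ge: "n \<le> card {x. x > 0 \<and> poly Q x = 0}" using LQ_roots[OF a b] by (simp add: Q_def)
  have fin: "finite {x. poly Q x = 0}" by (rule poly_roots_finite[OF Qnz])
  have sub: "{x. x > 0 \<and> poly Q x = 0} \<subseteq> {x. poly Q x = 0}" by auto
  have "card {x. x > 0 \<and> poly Q x = 0} = card {x. poly Q x = 0}"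
    using card_mono[OF fin sub] le ge by simp
  hence eq: "{x. x > 0 \<and> poly Q x = 0} = {x. poly Q x = 0}"
    using card_subset_eq[OF fin sub] by simp
  thus "{x. poly (LQ \<alpha> n \<beta>) x = 0} = {x. x > 0 \<and> poly (LQ \<alpha> n \<beta>) x = 0}" by (simp add: Q_def)
  show "card {x. poly (LQ \<alpha> n \<beta>) x = 0} = n" using le ge eq by (simp add: Q_def)
qed



lemma lagrange_basis:
  fixes S :: "real set"
  assumes fin: "finite S" and s: "s \<in> S"
  shows "\<exists>l. degree l \<le> card S - 1 \<and> (\<forall>t\<in>S. poly l t = (if t = s then 1 else 0))"
proof -
  define c where "c = (\<Prod>t\<in>S-{s}. s - t)"
  have c0: "c \<noteq> 0" using fin by (simp add: c_def)
  define l where "l = smult (1/c) (\<Prod>t\<in>S-{s}. [:-t,1:])"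
  have "degree l \<le> card S - 1"
  proof -
    have "degree l \<le> degree (\<Prod>t\<in>S-{s}. [:-t,(1::real):])" by (simp add: l_def)
    also have "\<dots> \<le> (\<Sum>t\<in>S-{s}. degree [:-t,(1::real):])"
      by (rule order.trans[OF degree_prod_sum_le]) (use fin in simp_all)
    also have "\<dots> = card S - 1" using fin s by simp
    finally show ?thesis .
  qed
  moreover have "\<forall>t\<in>S. poly l t = (if t = s then 1 else 0)"
  proof
    fix t assume t: "t \<in> S"
    show "poly l t = (if t = s then 1 else 0)"
    proof (cases "t = s")
      case True
      thus ?thesis using c0 by (simp add: l_def poly_prod c_def)
    next
      case False
      hence "(\<Prod>u\<in>S-{s}. t - u) = 0" using fin t by (intro prod_zero) auto
      thus ?thesis using False by (simp add: l_def poly_prod)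
    qed
  qed
  ultimately show ?thesis by blast
qed

lemma lagrange_family:
  fixes S :: "real set"
  assumes fin: "finite S"
  obtains L where "\<And>s. s \<in> S \<Longrightarrow> degree (L s) \<le> card S - 1"
    "\<And>s t. s \<in> S \<Longrightarrow> t \<in> S \<Longrightarrow> poly (L s) t = (if t = s then 1 else 0)"
proof -
  have "\<forall>s\<in>S. \<exists>l. degree l \<le> card S - 1 \<and> (\<forall>t\<in>S. poly l t = (if t = s then 1 else 0))"
    using lagrange_basis[OF fin] by blast
  then obtain L where "\<forall>s\<in>S. degree (L s) \<le> card S - 1 \<and> (\<forall>t\<in>S. poly (L s) t = (if t = s then 1 else 0))"
    by metis
  thus ?thesis using that by blast
qed

lemma lagrange_rep:
  fixes S :: "real set" and p :: "real poly"
  assumes fin: "finite S" and dL: "\<And>s. s \<in> S \<Longrightarrow> degree (L s) \<le> card S - 1"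
    and pL: "\<And>s t. s \<in> S \<Longrightarrow> t \<in> S \<Longrightarrow> poly (L s) t = (if t = s then 1 else 0)"
    and dp: "degree p < card S"
  shows "p = (\<Sum>s\<in>S. smult (poly p s) (L s))"
proof (rule poly_eqI_degree[of S])
  fix x assume x: "x \<in> S"
  have "poly (\<Sum>s\<in>S. smult (poly p s) (L s)) x = (\<Sum>s\<in>S. poly p s * (if x = s then 1 else 0))"
    using x by (simp add: poly_sum pL)
  also have "\<dots> = poly p x" using fin x by (simp add: if_distrib sum.delta cong: if_cong)
  finally show "poly p x = poly (\<Sum>s\<in>S. smult (poly p s) (L s)) x" by simp
next
  show "degree p < card S" by fact
  have "degree (\<Sum>s\<in>S. smult (poly p s) (L s)) \<le> card S - 1"
    by (rule degree_sum_le) (use fin dL in \<open>auto intro: order.trans[OF degree_smult_le]\<close>)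
  moreover have "card S > 0" using dp by simp
  ultimately show "degree (\<Sum>s\<in>S. smult (poly p s) (L s)) < card S" by simp
qed

definition IP :: "real \<Rightarrow> real \<Rightarrow> real poly \<Rightarrow> real" where
  "IP \<mu> \<beta> p = (LINT x:{0<..}|lborel. exp (- \<beta> * x) * poly p x * x powr \<mu>)"

lemma IP_add:
  assumes a: "\<mu> > -1" and b: "\<beta> > 0"
  shows "IP \<mu> \<beta> (p + q) = IP \<mu> \<beta> p + IP \<mu> \<beta> q"
proof -
  have "IP \<mu> \<beta> (p + q) = (LINT x:{0<..}|lborel. exp (- \<beta> * x) * poly p x * x powr \<mu> + exp (- \<beta> * x) * poly q x * x powr \<mu>)"
    unfolding IP_def by (simp add: algebra_simps)
  also have "\<dots> = IP \<mu> \<beta> p + IP \<mu> \<beta> q"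
    unfolding IP_def
    by (rule set_integral_add) (use int_poly[OF a b] in simp_all)
  finally show ?thesis .
qed

lemma IP_sum:
  assumes a: "\<mu> > -1" and b: "\<beta> > 0" and fin: "finite S"
  shows "IP \<mu> \<beta> (\<Sum>s\<in>S. smult (c s) (L s)) = (\<Sum>s\<in>S. c s * IP \<mu> \<beta> (L s))"
proof -
  have "IP \<mu> \<beta> (\<Sum>s\<in>S. smult (c s) (L s)) = (LINT x:{0<..}|lborel. (\<Sum>s\<in>S. c s * (exp (- \<beta> * x) * poly (L s) x * x powr \<mu>)))"
    unfolding IP_def by (simp add: poly_sum sum_distrib_left sum_distrib_right algebra_simps)
  also have "\<dots> = (\<Sum>s\<in>S. LINT x:{0<..}|lborel. c s * (exp (- \<beta> * x) * poly (L s) x * x powr \<mu>))"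
    by (rule conjunct2[OF set_integrable_sum'[OF fin]]) (use int_poly[OF a b] in simp)
  also have "\<dots> = (\<Sum>s\<in>S. c s * IP \<mu> \<beta> (L s))" by (simp add: IP_def)
  finally show ?thesis .
qed

lemma quad_generic:
  fixes S :: "real set" and PI :: "real poly"
  assumes a: "\<mu> > -1" and b: "\<beta> > 0"
    and fin: "finite S" and cS: "card S = N + 1"
    and roots: "\<And>x. x \<in> S \<longleftrightarrow> poly PI x = 0"
    and PInz: "PI \<noteq> 0" and dPI: "degree PI = N + 1"
    and m: "N + 1 \<le> m"
    and orth: "\<And>q. degree q + (N + 1) \<le> m \<Longrightarrow> IP \<mu> \<beta> (q * PI) = 0"
  shows "\<exists>!w. (\<forall>x. x \<notin> S \<longrightarrow> w x = 0) \<and>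
      (\<forall>p :: real poly. degree p \<le> m \<longrightarrow>
         IP \<mu> \<beta> p = (\<Sum>\<xi>\<in>S. exp (- \<beta> * \<xi>) * poly p \<xi> * w \<xi>))"
proof -
  obtain L where dL: "\<And>s. s \<in> S \<Longrightarrow> degree (L s) \<le> card S - 1"
    and pL: "\<And>s t. s \<in> S \<Longrightarrow> t \<in> S \<Longrightarrow> poly (L s) t = (if t = s then 1 else 0)"
    using lagrange_family[OF fin] by blast
  define w where "w = (\<lambda>x. if x \<in> S then exp (\<beta> * x) * IP \<mu> \<beta> (L x) else 0)"
  have ex: "(\<forall>x. x \<notin> S \<longrightarrow> w x = 0) \<and>
      (\<forall>p :: real poly. degree p \<le> m \<longrightarrow>
         IP \<mu> \<beta> p = (\<Sum>\<xi>\<in>S. exp (- \<beta> * \<xi>) * poly p \<xi> * w \<xi>))"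
  proof (intro conjI allI impI)
    fix x assume "x \<notin> S" thus "w x = 0" by (simp add: w_def)
  next
    fix p :: "real poly" assume dp: "degree p \<le> m"
    define d where "d = p div PI"
    define r where "r = p mod PI"
    have pdr: "p = d * PI + r" by (simp add: d_def r_def)
    have dr: "degree r < card S"
    proof (cases "r = 0")
      case True thus ?thesis using cS by simp
    next
      case False
      thus ?thesis using degree_mod_less'[OF PInz, of p] dPI cS by (simp add: r_def)
    qed
    have dd: "degree d + (N + 1) \<le> m"
    proof (cases "d = 0")
      case True thus ?thesis using m by simp
    next
      case False
      have "degree (d * PI) = degree d + (N + 1)" using False PInz dPI by (simp add: degree_mult_eq)
      moreover have "degree (d * PI) \<le> m"
      proof -
        have "d * PI = p - r" using pdr by simp
        hence "degree (d * PI) \<le> max (degree p) (degree r)" using degree_diff_le_max by metis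
        thus ?thesis using dp dr cS m by simp
      qed
      ultimately show ?thesis by simp
    qed
    have "IP \<mu> \<beta> p = IP \<mu> \<beta> (d * PI) + IP \<mu> \<beta> r" using pdr IP_add[OF a b] by metis
    also have "IP \<mu> \<beta> (d * PI) = 0" by (rule orth[OF dd])
    also have "IP \<mu> \<beta> r = IP \<mu> \<beta> (\<Sum>s\<in>S. smult (poly r s) (L s))"
      using lagrange_rep[OF fin dL pL dr] by simp
    also have "\<dots> = (\<Sum>s\<in>S. poly r s * IP \<mu> \<beta> (L s))" by (rule IP_sum[OF a b fin])
    also have "\<dots> = (\<Sum>\<xi>\<in>S. exp (- \<beta> * \<xi>) * poly p \<xi> * w \<xi>)"
    proof (rule sum.cong[OF refl])
      fix \<xi> assume x: "\<xi> \<in> S"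
      have "poly p \<xi> = poly r \<xi>" using pdr roots[of \<xi>] x by (metis add_0 mult_zero_right poly_add poly_mult)
      thus "poly r \<xi> * IP \<mu> \<beta> (L \<xi>) = exp (- \<beta> * \<xi>) * poly p \<xi> * w \<xi>"
        using x by (simp add: w_def exp_minus field_simps)
    qed
    finally show "IP \<mu> \<beta> p = (\<Sum>\<xi>\<in>S. exp (- \<beta> * \<xi>) * poly p \<xi> * w \<xi>)" by simp
  qed
  show ?thesis
  proof (rule ex1I[of _ w])
    show "(\<forall>x. x \<notin> S \<longrightarrow> w x = 0) \<and> (\<forall>p :: real poly. degree p \<le> m \<longrightarrow>
         IP \<mu> \<beta> p = (\<Sum>\<xi>\<in>S. exp (- \<beta> * \<xi>) * poly p \<xi> * w \<xi>))" by (rule ex)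
  next
    fix w' assume w': "(\<forall>x. x \<notin> S \<longrightarrow> w' x = 0) \<and> (\<forall>p :: real poly. degree p \<le> m \<longrightarrow>
         IP \<mu> \<beta> p = (\<Sum>\<xi>\<in>S. exp (- \<beta> * \<xi>) * poly p \<xi> * w' \<xi>))"
    show "w' = w"
    proof
      fix x show "w' x = w x"
      proof (cases "x \<in> S")
        case False thus ?thesis using w' by (simp add: w_def)
      next
        case True
        have "degree (L x) \<le> m" using dL[OF True] cS m by simp
        hence "IP \<mu> \<beta> (L x) = (\<Sum>\<xi>\<in>S. exp (- \<beta> * \<xi>) * poly (L x) \<xi> * w' \<xi>)" using w' by blast
        also have "\<dots> = (\<Sum>\<xi>\<in>S. if \<xi> = x then exp (- \<beta> * x) * w' x else 0)"
          by (rule sum.cong[OF refl]) (simp add: pL True)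
        also have "\<dots> = exp (- \<beta> * x) * w' x" using fin True by simp
        finally show ?thesis using True by (simp add: w_def exp_minus field_simps)
      qed
    qed
  qed
qed

lemma interp_generic:
  fixes S :: "real set"
  assumes fin: "finite S" and cS: "card S = N + 1"
  shows "\<exists>!q :: real poly. degree q \<le> N \<and> (\<forall>\<xi>\<in>S. exp (- \<beta> * \<xi> / 2) * poly q \<xi> = v \<xi>)"
proof -
  obtain L where dL: "\<And>s. s \<in> S \<Longrightarrow> degree (L s) \<le> card S - 1"
    and pL: "\<And>s t. s \<in> S \<Longrightarrow> t \<in> S \<Longrightarrow> poly (L s) t = (if t = s then 1 else 0)"
    using lagrange_family[OF fin] by blast
  define q where "q = (\<Sum>s\<in>S. smult (v s * exp (\<beta> * s / 2)) (L s))"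
  have dq: "degree q \<le> N"
    unfolding q_def
    by (rule degree_sum_le) (use fin dL cS in \<open>auto intro: order.trans[OF degree_smult_le]\<close>)
  have pq: "poly q \<xi> = v \<xi> * exp (\<beta> * \<xi> / 2)" if x: "\<xi> \<in> S" for \<xi>
  proof -
    have "poly q \<xi> = (\<Sum>s\<in>S. v s * exp (\<beta> * s / 2) * (if \<xi> = s then 1 else 0))"
      using x by (simp add: q_def poly_sum pL)
    also have "\<dots> = v \<xi> * exp (\<beta> * \<xi> / 2)" using fin x by (simp add: if_distrib sum.delta cong: if_cong)
    finally show ?thesis .
  qed
  show ?thesis
  proof (rule ex1I[of _ q])
    show "degree q \<le> N \<and> (\<forall>\<xi>\<in>S. exp (- \<beta> * \<xi> / 2) * poly q \<xi> = v \<xi>)"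
      using dq pq by (simp add: exp_minus field_simps)
  next
    fix q' assume q': "degree q' \<le> N \<and> (\<forall>\<xi>\<in>S. exp (- \<beta> * \<xi> / 2) * poly q' \<xi> = v \<xi>)"
    show "q' = q"
    proof (rule poly_eqI_degree[of S])
      fix x assume x: "x \<in> S"
      have "exp (- \<beta> * x / 2) * poly q' x = exp (- \<beta> * x / 2) * poly q x"
        using q' x pq[OF x] by (simp add: exp_minus field_simps)
      thus "poly q' x = poly q x" by simp
    qed (use q' dq cS in simp_all)
  qed
qed



definition MB :: "(real \<Rightarrow> real) \<Rightarrow> bool" where
  "MB f \<longleftrightarrow> (\<lambda>x. indicator {0<..} x * f x) \<in> borel_measurable borel"

definition SQ :: "real \<Rightarrow> (real \<Rightarrow> real) \<Rightarrow> bool" where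
  "SQ \<mu> f \<longleftrightarrow> MB f \<and> set_integrable lborel {0<..} (\<lambda>x. (f x)\<^sup>2 * x powr \<mu>)"

lemma MB_cont:
  assumes "continuous_on {0..} f" shows "MB f"
proof -
  have "{0<..} \<subseteq> {(0::real)..}" by auto
  hence "continuous_on {0<..} f" using assms continuous_on_subset by blast
  moreover have "{(0::real)<..} \<in> sets borel" by simp
  ultimately show ?thesis unfolding MB_def
    using borel_measurable_continuous_on_indicator[of "{0<..}" f] by simp
qed

lemma MB_diff: "MB f \<Longrightarrow> MB g \<Longrightarrow> MB (\<lambda>x. f x - g x)"
proof -
  assume "MB f" "MB g"
  hence "(\<lambda>x. indicator {0<..} x * f x - indicator {0<..} x * g x) \<in> borel_measurable borel"
    unfolding MB_def by measurable
  thus ?thesis unfolding MB_def by (simp add: algebra_simps)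
qed

lemma MB_mult_meas:
  assumes "MB f" "MB g"
  shows "(\<lambda>x. indicator {0<..} x * (f x * g x * x powr \<mu>)) \<in> borel_measurable borel"
proof -
  have "(\<lambda>x. (indicator {0<..} x * f x) * (indicator {0<..} x * g x) * x powr \<mu>) \<in> borel_measurable borel"
    using assms unfolding MB_def by measurable
  moreover have "(\<lambda>x. (indicator {0<..} x * f x) * (indicator {0<..} x * g x) * x powr \<mu>)
     = (\<lambda>x. indicator {0<..} x * (f x * g x * x powr \<mu>))"
    by (auto simp: indicator_def)
  ultimately show ?thesis by simp
qed

lemma sqrt_bound_aux:
  fixes A B c :: real
  assumes A: "A \<ge> 0" and B: "B \<ge> 0" and H: "\<And>t. t > 0 \<Longrightarrow> 2 * c \<le> t * A + B / t"
  shows "c \<le> sqrt A * sqrt B"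
proof (cases "A > 0 \<and> B > 0")
  case True
  define t where "t = sqrt B / sqrt A"
  have t: "t > 0" using True by (simp add: t_def)
  have "t * A + B / t = sqrt A * sqrt B + sqrt A * sqrt B"
    using True unfolding t_def
    by (simp add: field_simps real_sqrt_mult[symmetric])
  with H[OF t] show ?thesis by simp
next
  case False
  have "c \<le> 0"
  proof (rule ccontr)
    assume c: "\<not> c \<le> 0"
    show False
    proof (cases "A = 0")
      case True
      define t where "t = B / c + 1"
      have "B / c \<ge> 0" using c B by simp
      hence t: "t > 0" by (simp add: t_def)
      have "B / t < c" using c B t by (simp add: t_def field_simps)
      with H[OF t] True c show False by simp
    next
      case F: False
      hence B0: "B = 0" using False A B by auto
      define t where "t = c / (A + 1)"
      have t: "t > 0" using c A by (simp add: t_def)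
      have "t * A < c" using c A by (simp add: t_def field_simps)
      with H[OF t] B0 c show False by simp
    qed
  qed
  moreover have "0 \<le> sqrt A * sqrt B" using A B by simp
  ultimately show ?thesis by linarith
qed

lemma CS_weighted:
  assumes f: "SQ \<mu> f" and g: "SQ \<mu> g"
  shows "set_integrable lborel {0<..} (\<lambda>x. f x * g x * x powr \<mu>)"
    and "\<bar>LINT x:{0<..}|lborel. f x * g x * x powr \<mu>\<bar>
          \<le> sqrt (LINT x:{0<..}|lborel. (f x)\<^sup>2 * x powr \<mu>) * sqrt (LINT x:{0<..}|lborel. (g x)\<^sup>2 * x powr \<mu>)"
proof -
  have fi: "set_integrable lborel {0<..} (\<lambda>x. (f x)\<^sup>2 * x powr \<mu>)" using f by (simp add: SQ_def)
  have gi: "set_integrable lborel {0<..} (\<lambda>x. (g x)\<^sup>2 * x powr \<mu>)" using g by (simp add: SQ_def)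
  show fgi: "set_integrable lborel {0<..} (\<lambda>x. f x * g x * x powr \<mu>)"
    unfolding set_integrable_def
  proof (rule Bochner_Integration.integrable_bound)
    show "integrable lborel (\<lambda>x. indicator {0<..} x *\<^sub>R ((f x)\<^sup>2 * x powr \<mu> + (g x)\<^sup>2 * x powr \<mu>))"
      using fi gi unfolding set_integrable_def scaleR_add_right by (rule Bochner_Integration.integrable_add)
    show "(\<lambda>x. indicator {0<..} x *\<^sub>R (f x * g x * x powr \<mu>)) \<in> borel_measurable lborel"
      using MB_mult_meas[of f g \<mu>] f g by (simp add: SQ_def)
    show "AE x in lborel. norm (indicator {0<..} x *\<^sub>R (f x * g x * x powr \<mu>))
           \<le> norm (indicator {0<..} x *\<^sub>R ((f x)\<^sup>2 * x powr \<mu> + (g x)\<^sup>2 * x powr \<mu>))"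
    proof (rule AE_I2)
      fix x :: real
      have p: "x powr \<mu> \<ge> 0" by simp
      have "\<bar>f x * g x\<bar> \<le> (f x)\<^sup>2 + (g x)\<^sup>2"
      proof -
        have "0 \<le> (\<bar>f x\<bar> - \<bar>g x\<bar>) * (\<bar>f x\<bar> - \<bar>g x\<bar>)" by simp
        hence "2 * (\<bar>f x\<bar> * \<bar>g x\<bar>) \<le> \<bar>f x\<bar> * \<bar>f x\<bar> + \<bar>g x\<bar> * \<bar>g x\<bar>"
          by (simp add: algebra_simps)
        moreover have "0 \<le> \<bar>f x\<bar> * \<bar>g x\<bar>" by simp
        ultimately show ?thesis unfolding abs_mult power2_eq_square by linarith
      qed
      hence "\<bar>f x * g x\<bar> * x powr \<mu> \<le> ((f x)\<^sup>2 + (g x)\<^sup>2) * x powr \<mu>" using p by (rule mult_right_mono)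
      thus "norm (indicator {0<..} x *\<^sub>R (f x * g x * x powr \<mu>))
           \<le> norm (indicator {0<..} x *\<^sub>R ((f x)\<^sup>2 * x powr \<mu> + (g x)\<^sup>2 * x powr \<mu>))"
        using p by (auto simp: indicator_def abs_mult algebra_simps)
    qed
  qed
  define A where "A = (LINT x:{0<..}|lborel. (f x)\<^sup>2 * x powr \<mu>)"
  define B where "B = (LINT x:{0<..}|lborel. (g x)\<^sup>2 * x powr \<mu>)"
  define I where "I = (LINT x:{0<..}|lborel. f x * g x * x powr \<mu>)"
  have A0: "A \<ge> 0" unfolding A_def by (unfold set_lebesgue_integral_def, rule Bochner_Integration.integral_nonneg) (simp add: indicator_def)
  have B0: "B \<ge> 0" unfolding B_def by (unfold set_lebesgue_integral_def, rule Bochner_Integration.integral_nonneg) (simp add: indicator_def)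
  have H: "2 * \<bar>I\<bar> \<le> t * A + B / t" if t: "t > 0" for t
  proof -
    have eqR: "(LINT x:{0<..}|lborel. t * ((f x)\<^sup>2 * x powr \<mu>) + (1/t) * ((g x)\<^sup>2 * x powr \<mu>)) = t * A + B / t"
      unfolding A_def B_def
      by (subst set_integral_add) (use fi gi in auto)
    have Ri: "set_integrable lborel {0<..} (\<lambda>x. t * ((f x)\<^sup>2 * x powr \<mu>) + (1/t) * ((g x)\<^sup>2 * x powr \<mu>))"
      using set_integral_add(1)[OF set_integrable_mult_right[OF fi, of t] set_integrable_mult_right[OF gi, of "1/t"]] .
    have "2 * I = (LINT x:{0<..}|lborel. 2 * (f x * g x * x powr \<mu>))" by (simp add: I_def)
    also have "\<dots> \<le> (LINT x:{0<..}|lborel. t * ((f x)\<^sup>2 * x powr \<mu>) + (1/t) * ((g x)\<^sup>2 * x powr \<mu>))"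
    proof (rule set_integral_mono)
      show "set_integrable lborel {0<..} (\<lambda>x. 2 * (f x * g x * x powr \<mu>))" using fgi by simp
      show "set_integrable lborel {0<..} (\<lambda>x. t * ((f x)\<^sup>2 * x powr \<mu>) + (1/t) * ((g x)\<^sup>2 * x powr \<mu>))" by (rule Ri)
      fix x :: real
      have "0 \<le> (t * f x - g x)\<^sup>2 / t" using t by simp
      hence "2 * (f x * g x) \<le> t * (f x)\<^sup>2 + (1/t) * (g x)\<^sup>2" using t
        by (simp add: power2_eq_square field_simps)
      hence "2 * (f x * g x) * x powr \<mu> \<le> (t * (f x)\<^sup>2 + (1/t) * (g x)\<^sup>2) * x powr \<mu>"
        by (rule mult_right_mono) simp
      thus "2 * (f x * g x * x powr \<mu>) \<le> t * ((f x)\<^sup>2 * x powr \<mu>) + (1/t) * ((g x)\<^sup>2 * x powr \<mu>)"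
        by (simp add: algebra_simps)
    qed
    finally have u: "2 * I \<le> t * A + B / t" using eqR by simp
    have "(-2) * I = (LINT x:{0<..}|lborel. (-2) * (f x * g x * x powr \<mu>))" by (simp only: I_def set_integral_mult_right)
    also have "\<dots> \<le> (LINT x:{0<..}|lborel. t * ((f x)\<^sup>2 * x powr \<mu>) + (1/t) * ((g x)\<^sup>2 * x powr \<mu>))"
    proof (rule set_integral_mono)
      show "set_integrable lborel {0<..} (\<lambda>x. (-2) * (f x * g x * x powr \<mu>))"
        using set_integrable_mult_right[OF fgi, of "-2"] .
      show "set_integrable lborel {0<..} (\<lambda>x. t * ((f x)\<^sup>2 * x powr \<mu>) + (1/t) * ((g x)\<^sup>2 * x powr \<mu>))" by (rule Ri)
      fix x :: real
      have "0 \<le> (t * f x + g x)\<^sup>2 / t" using t by simp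
      hence "(-2) * (f x * g x) \<le> t * (f x)\<^sup>2 + (1/t) * (g x)\<^sup>2" using t
        by (simp add: power2_eq_square field_simps)
      hence "(-2) * (f x * g x) * x powr \<mu> \<le> (t * (f x)\<^sup>2 + (1/t) * (g x)\<^sup>2) * x powr \<mu>"
        by (rule mult_right_mono) simp
      thus "(-2) * (f x * g x * x powr \<mu>) \<le> t * ((f x)\<^sup>2 * x powr \<mu>) + (1/t) * ((g x)\<^sup>2 * x powr \<mu>)"
        by (simp add: algebra_simps)
    qed
    finally have l: "(-2) * I \<le> t * A + B / t" using eqR by simp
    show ?thesis using u l by linarith
  qed
  have "\<bar>I\<bar> \<le> sqrt A * sqrt B" by (rule sqrt_bound_aux[OF A0 B0 H])
  thus "\<bar>LINT x:{0<..}|lborel. f x * g x * x powr \<mu>\<bar>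
          \<le> sqrt (LINT x:{0<..}|lborel. (f x)\<^sup>2 * x powr \<mu>) * sqrt (LINT x:{0<..}|lborel. (g x)\<^sup>2 * x powr \<mu>)"
    by (simp add: A_def B_def I_def)
qed

lemma SQ_diff:
  assumes f: "SQ \<mu> f" and g: "SQ \<mu> g"
  shows "SQ \<mu> (\<lambda>x. f x - g x)"
proof -
  have mb: "MB (\<lambda>x. f x - g x)" using f g by (simp add: SQ_def MB_diff)
  have fi: "set_integrable lborel {0<..} (\<lambda>x. (f x)\<^sup>2 * x powr \<mu>)" using f by (simp add: SQ_def)
  have gi: "set_integrable lborel {0<..} (\<lambda>x. (g x)\<^sup>2 * x powr \<mu>)" using g by (simp add: SQ_def)
  have "set_integrable lborel {0<..} (\<lambda>x. (f x - g x)\<^sup>2 * x powr \<mu>)"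
    unfolding set_integrable_def
  proof (rule Bochner_Integration.integrable_bound)
    show "integrable lborel (\<lambda>x. indicator {0<..} x *\<^sub>R (2 * ((f x)\<^sup>2 * x powr \<mu>) + 2 * ((g x)\<^sup>2 * x powr \<mu>)))"
      using set_integral_add(1)[OF set_integrable_mult_right[OF fi, of 2] set_integrable_mult_right[OF gi, of 2]]
      unfolding set_integrable_def by simp
    have "(\<lambda>x. indicator {0<..} x * ((f x - g x) * (f x - g x) * x powr \<mu>)) \<in> borel_measurable borel"
      by (rule MB_mult_meas[OF mb mb])
    thus "(\<lambda>x. indicator {0<..} x *\<^sub>R ((f x - g x)\<^sup>2 * x powr \<mu>)) \<in> borel_measurable lborel"
      by (simp add: power2_eq_square)
    show "AE x in lborel. norm (indicator {0<..} x *\<^sub>R ((f x - g x)\<^sup>2 * x powr \<mu>))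
           \<le> norm (indicator {0<..} x *\<^sub>R (2 * ((f x)\<^sup>2 * x powr \<mu>) + 2 * ((g x)\<^sup>2 * x powr \<mu>)))"
    proof (rule AE_I2)
      fix x :: real
      have p: "x powr \<mu> \<ge> 0" by simp
      have "(f x - g x)\<^sup>2 \<le> 2 * (f x)\<^sup>2 + 2 * (g x)\<^sup>2"
        using zero_le_square[of "f x + g x"] by (simp add: power2_eq_square algebra_simps)
      hence "(f x - g x)\<^sup>2 * x powr \<mu> \<le> (2 * (f x)\<^sup>2 + 2 * (g x)\<^sup>2) * x powr \<mu>" using p by (rule mult_right_mono)
      thus "norm (indicator {0<..} x *\<^sub>R ((f x - g x)\<^sup>2 * x powr \<mu>))
           \<le> norm (indicator {0<..} x *\<^sub>R (2 * ((f x)\<^sup>2 * x powr \<mu>) + 2 * ((g x)\<^sup>2 * x powr \<mu>)))"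
        using p by (auto simp: indicator_def algebra_simps)
    qed
  qed
  thus ?thesis using mb by (simp add: SQ_def)
qed

lemma wnorm_nonneg: "wnorm \<mu> f \<ge> 0"
  unfolding wnorm_def by (rule real_sqrt_ge_zero, unfold set_lebesgue_integral_def, rule Bochner_Integration.integral_nonneg) (simp add: indicator_def)

lemma aux_ineq:
  fixes a b c d e f :: real
  assumes "0 \<le> a" "0 \<le> b" "0 \<le> c" "0 \<le> d" "0 \<le> e" "0 \<le> f"
  shows "e * b + c * f \<le> (a + b + c + d) * (e + f)"
proof -
  have "e * b \<le> e * (a + b + c + d)" "c * f \<le> (a + b + c + d) * f"
    using assms by (simp_all add: mult_left_mono mult_right_mono)
  hence "e * b + c * f \<le> (a + b + c + d) * e + (a + b + c + d) * f" by (simp add: algebra_simps)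
  thus ?thesis by (simp add: algebra_simps)
qed

lemma main_estimate:
  assumes f1: "SQ \<mu> f1" and f2: "SQ \<mu> f2" and g1: "SQ \<mu> g1" and g2: "SQ \<mu> g2"
  shows "\<bar>(LINT x:{0<..}|lborel. f1 x * f2 x * x powr \<mu>) - (LINT x:{0<..}|lborel. g1 x * g2 x * x powr \<mu>)\<bar>
     \<le> (wnorm \<mu> f1 + wnorm \<mu> f2 + wnorm \<mu> g1 + wnorm \<mu> g2)
              * (wnorm \<mu> (\<lambda>x. f1 x - g1 x) + wnorm \<mu> (\<lambda>x. f2 x - g2 x))"
proof -
  have d1: "SQ \<mu> (\<lambda>x. f1 x - g1 x)" by (rule SQ_diff[OF f1 g1])
  have d2: "SQ \<mu> (\<lambda>x. f2 x - g2 x)" by (rule SQ_diff[OF f2 g2])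
  note c1 = CS_weighted[OF d1 f2] and c2 = CS_weighted[OF g1 d2]
  have i12: "set_integrable lborel {0<..} (\<lambda>x. f1 x * f2 x * x powr \<mu>)" by (rule CS_weighted(1)[OF f1 f2])
  have j12: "set_integrable lborel {0<..} (\<lambda>x. g1 x * g2 x * x powr \<mu>)" by (rule CS_weighted(1)[OF g1 g2])
  have "(LINT x:{0<..}|lborel. f1 x * f2 x * x powr \<mu>) - (LINT x:{0<..}|lborel. g1 x * g2 x * x powr \<mu>)
      = (LINT x:{0<..}|lborel. f1 x * f2 x * x powr \<mu> - g1 x * g2 x * x powr \<mu>)"
    by (rule set_integral_diff(2)[OF i12 j12, symmetric])
  also have "\<dots> = (LINT x:{0<..}|lborel. (f1 x - g1 x) * f2 x * x powr \<mu> + g1 x * (f2 x - g2 x) * x powr \<mu>)"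
    by (simp add: algebra_simps)
  also have "\<dots> = (LINT x:{0<..}|lborel. (f1 x - g1 x) * f2 x * x powr \<mu>) + (LINT x:{0<..}|lborel. g1 x * (f2 x - g2 x) * x powr \<mu>)"
    by (rule set_integral_add(2)[OF c1(1) c2(1)])
  finally have eq: "(LINT x:{0<..}|lborel. f1 x * f2 x * x powr \<mu>) - (LINT x:{0<..}|lborel. g1 x * g2 x * x powr \<mu>)
     = (LINT x:{0<..}|lborel. (f1 x - g1 x) * f2 x * x powr \<mu>) + (LINT x:{0<..}|lborel. g1 x * (f2 x - g2 x) * x powr \<mu>)" .
  have "\<bar>\<dots>\<bar> \<le> wnorm \<mu> (\<lambda>x. f1 x - g1 x) * wnorm \<mu> f2 + wnorm \<mu> g1 * wnorm \<mu> (\<lambda>x. f2 x - g2 x)"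
    using c1(2) c2(2) unfolding wnorm_def by linarith
  also have "\<dots> \<le> (wnorm \<mu> f1 + wnorm \<mu> f2 + wnorm \<mu> g1 + wnorm \<mu> g2)
              * (wnorm \<mu> (\<lambda>x. f1 x - g1 x) + wnorm \<mu> (\<lambda>x. f2 x - g2 x))"
    using wnorm_nonneg[of \<mu> f1] wnorm_nonneg[of \<mu> f2] wnorm_nonneg[of \<mu> g1] wnorm_nonneg[of \<mu> g2]
      wnorm_nonneg[of \<mu> "\<lambda>x. f1 x - g1 x"] wnorm_nonneg[of \<mu> "\<lambda>x. f2 x - g2 x"]
    by (rule aux_ineq)
  finally show ?thesis using eq by simp
qed



lemma LQ_pos:
  assumes a: "\<alpha> > -1" and b: "\<beta> > 0" and r: "poly (LQ \<alpha> n \<beta>) x = 0"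
  shows "x > 0"
proof -
  have "x \<in> {x. poly (LQ \<alpha> n \<beta>) x = 0}" using r by simp
  hence "x \<in> {x. x > 0 \<and> poly (LQ \<alpha> n \<beta>) x = 0}" by (simp only: LQ_roots_exact(1)[OF a b])
  thus ?thesis by simp
qed

lemma nodes_generic:
  assumes a: "\<mu> > -1" and b: "\<beta> > 0" and N: "N \<ge> 1"
  shows "\<exists>PI. finite (lg_nodes Z \<mu> \<beta> N) \<and> card (lg_nodes Z \<mu> \<beta> N) = N + 1 \<and>
     (\<forall>x. x \<in> lg_nodes Z \<mu> \<beta> N \<longleftrightarrow> poly PI x = 0) \<and> PI \<noteq> 0 \<and> degree PI = N + 1 \<and>
     (\<forall>q. degree q + (N + 1) \<le> 2 * N + lam Z \<longrightarrow> IP \<mu> \<beta> (q * PI) = 0)"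
proof (cases Z)
  case Gauss
  define PI where "PI = LQ \<mu> (N+1) \<beta>"
  have dPI: "degree PI = N + 1" by (simp add: PI_def degree_LQ[OF b])
  hence PInz: "PI \<noteq> 0" by auto
  have S: "lg_nodes Z \<mu> \<beta> N = {x. poly PI x = 0}"
  proof -
    have "lg_nodes Z \<mu> \<beta> N = {x. 0 \<le> x \<and> poly PI x = 0}"
      using Gauss by (simp add: lg_nodes_def hat_laguerre_def PI_def poly_LQ)
    also have "\<dots> = {x. poly PI x = 0}"
      using LQ_pos[OF a b, of "N+1"] unfolding PI_def by (auto intro: less_imp_le)
    finally show ?thesis .
  qed
  have fin: "finite (lg_nodes Z \<mu> \<beta> N)" using S poly_roots_finite[OF PInz] by simp
  have card: "card (lg_nodes Z \<mu> \<beta> N) = N + 1" using S LQ_roots_exact(2)[OF a b, of "N+1"] by (simp add: PI_def)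
  have orth: "IP \<mu> \<beta> (q * PI) = 0" if "degree q + (N + 1) \<le> 2 * N + lam Z" for q
  proof -
    have "degree q < N + 1" using that Gauss by (simp add: lam_def)
    thus ?thesis unfolding IP_def PI_def by (rule LQ_orth[OF a b])
  qed
  show ?thesis
    by (rule exI[of _ PI], intro conjI allI impI fin card PInz dPI orth) (simp_all add: S)
next
  case Radau
  define Q where "Q = LQ (\<mu>+1) N \<beta>"
  define PI where "PI = [:0,1:] * Q"
  have a1: "\<mu> + 1 > -1" using a by simp
  have dQ: "degree Q = N" by (simp add: Q_def degree_LQ[OF b])
  have Qnz: "Q \<noteq> 0" using dQ N by auto
  have dPI: "degree PI = N + 1" using Qnz dQ by (simp add: PI_def degree_mult_eq)
  hence PInz: "PI \<noteq> 0" by auto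
  have Qr: "\<And>x. poly Q x = 0 \<Longrightarrow> x > 0"
    using LQ_pos[OF a1 b, of N] by (simp add: Q_def)
  have S: "lg_nodes Z \<mu> \<beta> N = {x. poly PI x = 0}"
  proof -
    have "lg_nodes Z \<mu> \<beta> N = {x. 0 \<le> x \<and> (x = 0 \<or> poly Q x = 0)}"
      using Radau by (auto simp: lg_nodes_def hat_laguerre_def Q_def poly_LQ)
    also have "\<dots> = {x. poly PI x = 0}"
      using Qr by (force simp: PI_def)
    finally show ?thesis .
  qed
  have S': "lg_nodes Z \<mu> \<beta> N = insert 0 {x. poly Q x = 0}" using S by (auto simp: PI_def)
  have finQ: "finite {x. poly Q x = 0}" by (rule poly_roots_finite[OF Qnz])
  have fin: "finite (lg_nodes Z \<mu> \<beta> N)" using S' finQ by simp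
  have "0 \<notin> {x. poly Q x = 0}" using Qr[of 0] by auto
  hence card: "card (lg_nodes Z \<mu> \<beta> N) = N + 1"
    using S' finQ LQ_roots_exact(2)[OF a1 b, of N] by (simp add: Q_def)
  have orth: "IP \<mu> \<beta> (q * PI) = 0" if "degree q + (N + 1) \<le> 2 * N + lam Z" for q
  proof -
    have dq: "degree q < N" using that Radau N by (simp add: lam_def)
    have "IP \<mu> \<beta> (q * PI) = (LINT x:{0<..}|lborel. exp (-\<beta>*x) * poly (q * Q) x * x powr (\<mu>+1))"
      unfolding IP_def
    proof (rule set_lebesgue_integral_cong)
      show "{(0::real)<..} \<in> sets lborel" by simp
      show "\<forall>x. x \<in> {0<..} \<longrightarrow> exp (- \<beta> * x) * poly (q * PI) x * x powr \<mu> = exp (-\<beta>*x) * poly (q * Q) x * x powr (\<mu>+1)"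
      proof (intro allI impI)
        fix x :: real assume "x \<in> {0<..}"
        hence x: "x > 0" by simp
        have "x powr (\<mu>+1) = x powr \<mu> * x" using x by (simp add: powr_add powr_one)
        thus "exp (- \<beta> * x) * poly (q * PI) x * x powr \<mu> = exp (-\<beta>*x) * poly (q * Q) x * x powr (\<mu>+1)"
          by (simp add: PI_def ac_simps)
      qed
    qed
    also have "\<dots> = 0" using LQ_orth[OF a1 b dq] by (simp add: Q_def)
    finally show ?thesis .
  qed
  show ?thesis
    by (rule exI[of _ PI], intro conjI allI impI fin card PInz dPI orth) (simp_all add: S)
qed

lemma weight_prop:
  assumes a: "\<mu> > -1" and b: "\<beta> > 0" and N: "N \<ge> 1"
  shows "\<forall>p :: real poly. degree p \<le> 2 * N + lam Z \<longrightarrow>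
         IP \<mu> \<beta> p = (\<Sum>\<xi>\<in>lg_nodes Z \<mu> \<beta> N. exp (- \<beta> * \<xi>) * poly p \<xi> * lg_weight Z \<mu> \<beta> N \<xi>)"
proof -
  obtain PI where P: "finite (lg_nodes Z \<mu> \<beta> N)" "card (lg_nodes Z \<mu> \<beta> N) = N + 1"
     "\<And>x. x \<in> lg_nodes Z \<mu> \<beta> N \<longleftrightarrow> poly PI x = 0" "PI \<noteq> 0" "degree PI = N + 1"
     "\<And>q. degree q + (N + 1) \<le> 2 * N + lam Z \<Longrightarrow> IP \<mu> \<beta> (q * PI) = 0"
    using nodes_generic[OF a b N, of Z] by blast
  have m: "N + 1 \<le> 2 * N + lam Z" using N by simp
  note u = quad_generic[OF a b P(1,2) P(3) P(4,5) m P(6)]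
  have "(\<forall>x. x \<notin> lg_nodes Z \<mu> \<beta> N \<longrightarrow> lg_weight Z \<mu> \<beta> N x = 0) \<and>
      (\<forall>p :: real poly. degree p \<le> 2 * N + lam Z \<longrightarrow>
         IP \<mu> \<beta> p = (\<Sum>\<xi>\<in>lg_nodes Z \<mu> \<beta> N. exp (- \<beta> * \<xi>) * poly p \<xi> * lg_weight Z \<mu> \<beta> N \<xi>))"
    unfolding lg_weight_def IP_def by (rule theI'[OF u[unfolded IP_def]])
  thus ?thesis by (rule conjunct2)
qed

lemma interp_prop:
  assumes a: "\<mu> > -1" and b: "\<beta> > 0" and N: "N \<ge> 1"
  obtains q where "degree q \<le> N" "\<forall>\<xi>\<in>lg_nodes Z \<mu> \<beta> N. exp (- \<beta> * \<xi> / 2) * poly q \<xi> = v \<xi>"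
    "lg_interp Z \<mu> \<beta> N v = (\<lambda>x. exp (- \<beta> * x / 2) * poly q x)"
proof -
  obtain PI where P: "finite (lg_nodes Z \<mu> \<beta> N)" "card (lg_nodes Z \<mu> \<beta> N) = N + 1"
    using nodes_generic[OF a b N, of Z] by blast
  note u = interp_generic[OF P, of \<beta> v]
  define q where "q = (THE q :: real poly. degree q \<le> N \<and>
        (\<forall>\<xi>\<in>lg_nodes Z \<mu> \<beta> N. exp (- \<beta> * \<xi> / 2) * poly q \<xi> = v \<xi>))"
  have "degree q \<le> N \<and> (\<forall>\<xi>\<in>lg_nodes Z \<mu> \<beta> N. exp (- \<beta> * \<xi> / 2) * poly q \<xi> = v \<xi>)"
    unfolding q_def by (rule theI'[OF u])
  moreover have "lg_interp Z \<mu> \<beta> N v = (\<lambda>x. exp (- \<beta> * x / 2) * poly q x)"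
    unfolding lg_interp_def q_def Let_def ..
  ultimately show ?thesis using that by blast
qed

lemma SQ_exp_poly:
  assumes a: "\<mu> > -1" and b: "\<beta> > 0"
  shows "SQ \<mu> (\<lambda>x. exp (- \<beta> * x / 2) * poly q x)"
proof -
  have "continuous_on {0..} (\<lambda>x. exp (- \<beta> * x / 2) * poly q x)"
    by (intro continuous_intros) auto
  hence "MB (\<lambda>x. exp (- \<beta> * x / 2) * poly q x)" by (rule MB_cont)
  moreover have "(\<lambda>x. (exp (- \<beta> * x / 2) * poly q x)\<^sup>2 * x powr \<mu>) = (\<lambda>x. exp (- \<beta> * x) * poly (q * q) x * x powr \<mu>)"
  proof
    fix x
    have "exp (- \<beta> * x / 2) * exp (- \<beta> * x / 2) = exp (- \<beta> * x)"
      by (simp add: exp_add[symmetric])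
    thus "(exp (- \<beta> * x / 2) * poly q x)\<^sup>2 * x powr \<mu> = exp (- \<beta> * x) * poly (q * q) x * x powr \<mu>"
      by (simp add: power2_eq_square algebra_simps)
  qed
  ultimately show ?thesis using int_poly[OF a b, of "q*q"] by (simp add: SQ_def)
qed

theorem mainTheorem12:
  fixes \<mu> \<beta> :: real and N :: nat and Z :: quad_kind and \<phi>1 \<phi>2 :: "real \<Rightarrow> real"
  assumes "\<mu> > -1" and "\<beta> > 0" and "N \<ge> 1"
    and "continuous_on {0..} \<phi>1" and "continuous_on {0..} \<phi>2"
    and "set_integrable lborel {0<..} (\<lambda>x. (\<phi>1 x)\<^sup>2 * x powr \<mu>)"
    and "set_integrable lborel {0<..} (\<lambda>x. (\<phi>2 x)\<^sup>2 * x powr \<mu>)"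
  shows "let \<phi> = (\<lambda>x. \<phi>1 x * \<phi>2 x);
             \<psi>1 = lg_interp Z \<mu> \<beta> N \<phi>1;
             \<psi>2 = lg_interp Z \<mu> \<beta> N \<phi>2
         in \<bar>(LINT x:{0<..}|lborel. \<phi> x * x powr \<mu>)
              - (\<Sum>\<xi>\<in>lg_nodes Z \<mu> \<beta> N. \<phi> \<xi> * lg_weight Z \<mu> \<beta> N \<xi>)\<bar>
            \<le> (wnorm \<mu> \<phi>1 + wnorm \<mu> \<phi>2 + wnorm \<mu> \<psi>1 + wnorm \<mu> \<psi>2)
              * (wnorm \<mu> (\<lambda>x. \<phi>1 x - \<psi>1 x) + wnorm \<mu> (\<lambda>x. \<phi>2 x - \<psi>2 x))"
proof -
  note a = assms(1) and b = assms(2) and N = assms(3)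
  obtain q1 where q1: "degree q1 \<le> N" "\<forall>\<xi>\<in>lg_nodes Z \<mu> \<beta> N. exp (- \<beta> * \<xi> / 2) * poly q1 \<xi> = \<phi>1 \<xi>"
    "lg_interp Z \<mu> \<beta> N \<phi>1 = (\<lambda>x. exp (- \<beta> * x / 2) * poly q1 x)"
    by (rule interp_prop[OF a b N])
  obtain q2 where q2: "degree q2 \<le> N" "\<forall>\<xi>\<in>lg_nodes Z \<mu> \<beta> N. exp (- \<beta> * \<xi> / 2) * poly q2 \<xi> = \<phi>2 \<xi>"
    "lg_interp Z \<mu> \<beta> N \<phi>2 = (\<lambda>x. exp (- \<beta> * x / 2) * poly q2 x)"
    by (rule interp_prop[OF a b N])
  define \<psi>1 where "\<psi>1 = (\<lambda>x. exp (- \<beta> * x / 2) * poly q1 x)"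
  define \<psi>2 where "\<psi>2 = (\<lambda>x. exp (- \<beta> * x / 2) * poly q2 x)"
  have sq1: "SQ \<mu> \<phi>1" using MB_cont[OF assms(4)] assms(6) by (simp add: SQ_def)
  have sq2: "SQ \<mu> \<phi>2" using MB_cont[OF assms(5)] assms(7) by (simp add: SQ_def)
  have sp1: "SQ \<mu> \<psi>1" unfolding \<psi>1_def by (rule SQ_exp_poly[OF a b])
  have sp2: "SQ \<mu> \<psi>2" unfolding \<psi>2_def by (rule SQ_exp_poly[OF a b])
  have ee: "exp (- \<beta> * x / 2) * exp (- \<beta> * x / 2) = exp (- \<beta> * x)" for x
    by (simp add: exp_add[symmetric])
  have "(\<Sum>\<xi>\<in>lg_nodes Z \<mu> \<beta> N. \<phi>1 \<xi> * \<phi>2 \<xi> * lg_weight Z \<mu> \<beta> N \<xi>)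
      = (\<Sum>\<xi>\<in>lg_nodes Z \<mu> \<beta> N. exp (- \<beta> * \<xi>) * poly (q1 * q2) \<xi> * lg_weight Z \<mu> \<beta> N \<xi>)"
  proof (rule sum.cong[OF refl])
    fix \<xi> assume x: "\<xi> \<in> lg_nodes Z \<mu> \<beta> N"
    have e1: "\<phi>1 \<xi> = exp (- \<beta> * \<xi> / 2) * poly q1 \<xi>" using q1(2) x by simp
    have e2: "\<phi>2 \<xi> = exp (- \<beta> * \<xi> / 2) * poly q2 \<xi>" using q2(2) x by simp
    have "\<phi>1 \<xi> * \<phi>2 \<xi> = exp (- \<beta> * \<xi>) * (poly q1 \<xi> * poly q2 \<xi>)"
      unfolding e1 e2 ee[symmetric] by (simp only: ac_simps)
    thus "\<phi>1 \<xi> * \<phi>2 \<xi> * lg_weight Z \<mu> \<beta> N \<xi> = exp (- \<beta> * \<xi>) * poly (q1 * q2) \<xi> * lg_weight Z \<mu> \<beta> N \<xi>"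
      by simp
  qed
  also have "\<dots> = IP \<mu> \<beta> (q1 * q2)"
  proof -
    have "degree (q1 * q2) \<le> 2 * N + lam Z"
      using degree_mult_le[of q1 q2] q1(1) q2(1) by simp
    hence "IP \<mu> \<beta> (q1 * q2) = (\<Sum>\<xi>\<in>lg_nodes Z \<mu> \<beta> N. exp (- \<beta> * \<xi>) * poly (q1 * q2) \<xi> * lg_weight Z \<mu> \<beta> N \<xi>)"
      using weight_prop[OF a b N, of Z] by blast
    thus ?thesis by (rule sym)
  qed
  also have "\<dots> = (LINT x:{0<..}|lborel. \<psi>1 x * \<psi>2 x * x powr \<mu>)"
    unfolding IP_def
  proof (rule arg_cong[where f = "set_lebesgue_integral lborel {0<..}"], rule ext)
    fix x :: real
    show "exp (- \<beta> * x) * poly (q1 * q2) x * x powr \<mu> = \<psi>1 x * \<psi>2 x * x powr \<mu>"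
      unfolding \<psi>1_def \<psi>2_def poly_mult ee[symmetric] by (simp only: ac_simps)
  qed
  finally have sum_eq: "(\<Sum>\<xi>\<in>lg_nodes Z \<mu> \<beta> N. \<phi>1 \<xi> * \<phi>2 \<xi> * lg_weight Z \<mu> \<beta> N \<xi>)
      = (LINT x:{0<..}|lborel. \<psi>1 x * \<psi>2 x * x powr \<mu>)" .
  have est: "\<bar>(LINT x:{0<..}|lborel. \<phi>1 x * \<phi>2 x * x powr \<mu>) - (LINT x:{0<..}|lborel. \<psi>1 x * \<psi>2 x * x powr \<mu>)\<bar>
     \<le> (wnorm \<mu> \<phi>1 + wnorm \<mu> \<phi>2 + wnorm \<mu> \<psi>1 + wnorm \<mu> \<psi>2)
              * (wnorm \<mu> (\<lambda>x. \<phi>1 x - \<psi>1 x) + wnorm \<mu> (\<lambda>x. \<phi>2 x - \<psi>2 x))"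
    by (rule main_estimate[OF sq1 sq2 sp1 sp2])
  show ?thesis
    unfolding Let_def q1(3) q2(3) \<psi>1_def[symmetric] \<psi>2_def[symmetric] sum_eq
    using est by simp
qed


end
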